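(* Let $d\geq 2$ and $m\geq 1$ be integers. Let $\{e^d_k\}$ and $\{e^{d+m}_k\}$ be the standard bases of $\mathbb{C}^d$ and $\mathbb{C}^{d+m}$, and let $|J\rangle=\sum_{k=1}^d e^d_k$. Define $d\times(d+m)$ matrices $$V_i=\sum_{k=1}^{d}|e^d_k\rangle\langle e^{d+m}_{\mathrm{mod}(k+i-2,\,d+1)+1}|\quad (i=1,\dots,d+1),\qquad V_i=|J\rangle\langle e^{d+m}_i|\quad (i=d+2,\dots,d+m),$$ where $\mathrm{mod}(a,n)\in\{0,\dots,n-1\}$ is the remainder of $a$ modulo $n$, and let $\Phi:M_d\to M_{d+m}$ be $\Phi(X)=\frac{1}{d(d+m)}\sum_{i=1}^{d+m}V_i^\dagger XV_i$. Let $\rho=\sum_{r,s=1}^{d}E_{rs}\otimes\Phi(E_{rs})\in M_d\otimes M_{d+m}$ be the Choi state of $\Phi$. Then $\rho$ has positive partial transpose, i.e. $(T\otimes\mathrm{id})(\rho)\geq 0$, where $T$ is the transpose on $M_d$.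
   Context: $M_n$ denotes the complex $n\times n$ matrices and $E_{rs}$ the matrix units of $M_d$. *)

theory Defs
  imports Complex_Main "HOL-Library.Complex_Order"
begin

text \<open>Matrices are represented as functions from (row, column) indices to complex numbers,
  with explicit index sets. Indices are 1-based as in the paper. Matrices on
  C^d \<otimes> C^(d+m) are indexed by pairs (k, l) with k in {1..d}, l in {1..d+m}.\<close>

definition Eunit :: "nat \<Rightarrow> nat \<Rightarrow> nat \<Rightarrow> nat \<Rightarrow> complex" where
  "Eunit r s = (\<lambda>x y. if x = r \<and> y = s then 1 else 0)"

definition Vmat :: "nat \<Rightarrow> nat \<Rightarrow> nat \<Rightarrow> nat \<Rightarrow> nat \<Rightarrow> complex" where
  "Vmat d m i = (\<lambda>x y.
     if i \<le> d + 1
     then (if 1 \<le> x \<and> x \<le> d \<and> y = (x + i - 2) mod (d + 1) + 1 then 1 else 0)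
     else (if 1 \<le> x \<and> x \<le> d \<and> y = i then 1 else 0))"

definition Phi :: "nat \<Rightarrow> nat \<Rightarrow> (nat \<Rightarrow> nat \<Rightarrow> complex) \<Rightarrow> nat \<Rightarrow> nat \<Rightarrow> complex" where
  "Phi d m X = (\<lambda>a b. (1 / of_nat (d * (d + m))) *
     (\<Sum>i\<in>{1..d+m}. \<Sum>r\<in>{1..d}. \<Sum>s\<in>{1..d}.
        cnj (Vmat d m i r a) * X r s * Vmat d m i s b))"

definition choi :: "nat \<Rightarrow> nat \<Rightarrow> nat \<times> nat \<Rightarrow> nat \<times> nat \<Rightarrow> complex" where
  "choi d m = (\<lambda>(x, a) (y, b). \<Sum>r\<in>{1..d}. \<Sum>s\<in>{1..d}. Eunit r s x y * Phi d m (Eunit r s) a b)"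

definition ptrans1 :: "(nat \<times> nat \<Rightarrow> nat \<times> nat \<Rightarrow> complex) \<Rightarrow> nat \<times> nat \<Rightarrow> nat \<times> nat \<Rightarrow> complex" where
  "ptrans1 M = (\<lambda>(x, a) (y, b). M (y, a) (x, b))"

text \<open>Positive semidefiniteness of a complex matrix indexed by a finite set I:
  v^\<dagger> M v \<ge> 0 (as a complex number, i.e. real and nonnegative) for every vector v.\<close>
definition psd :: "'a set \<Rightarrow> ('a \<Rightarrow> 'a \<Rightarrow> complex) \<Rightarrow> bool" where
  "psd I M \<longleftrightarrow> (\<forall>v :: 'a \<Rightarrow> complex. (\<Sum>x\<in>I. \<Sum>y\<in>I. cnj (v x) * M x y * v y) \<ge> 0)"

end

theory Submission
  imports Defs
begin

lemma modaux:
  fixes a y i n :: nat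
  assumes "a < n" "y < n" "i < n"
  shows "(a = (y + i) mod n) \<longleftrightarrow> (i = (a + n - y) mod n)"
proof -
  have m1: "(y+i) mod n = (if y + i < n then y + i else y + i - n)"
    using assms by (simp add: mod_if)
  have m2: "(a + n - y) mod n = (if a + n - y < n then a + n - y else a - y)"
    using assms by (auto simp add: mod_if)
  show ?thesis unfolding m1 m2 using assms by auto
qed

lemma Lcong:
  fixes a b x y n :: nat
  assumes "y < n" "x < n"
  shows "((a + n - y) mod n = (b + n - x) mod n) \<longleftrightarrow> ((a + x) mod n = (b + y) mod n)"
proof -
  have "int ((a + n - y) mod n) = (int a + int n - int y) mod int n" using assms by (simp add: zmod_int of_nat_diff)
  moreover have "int ((b + n - x) mod n) = (int b + int n - int x) mod int n" using assms by (simp add: zmod_int of_nat_diff)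
  moreover have "int ((a + x) mod n) = (int a + int x) mod int n" by (simp add: zmod_int)
  moreover have "int ((b + y) mod n) = (int b + int y) mod int n" by (simp add: zmod_int)
  moreover have "((int a + int n - int y) mod int n = (int b + int n - int x) mod int n) \<longleftrightarrow> ((int a + int x) mod int n = (int b + int y) mod int n)"
    unfolding mod_eq_dvd_iff by (smt (verit) add_diff_eq diff_add_eq diff_diff_eq2 diff_diff_eq add.commute add_diff_cancel_right)
  ultimately show ?thesis by (metis of_nat_eq_iff)
qed
definition idx :: "nat \<Rightarrow> nat \<Rightarrow> nat \<Rightarrow> nat" where
  "idx d y a = (if a \<le> d + 1 then (a + (d+1) - y) mod (d+1) + 1 else a)"

definition LL :: "nat \<Rightarrow> nat \<times> nat \<Rightarrow> nat" where
  "LL d p = (if snd p \<le> d + 1 then (snd p + fst p) mod (d+1) else snd p)"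

lemma V_idx:
  assumes "1 \<le> i" "i \<le> d + m" "1 \<le> y" "y \<le> d" "1 \<le> a" "a \<le> d + m"
  shows "Vmat d m i y a = (if i = idx d y a then 1 else 0)"
proof (cases "i \<le> d + 1")
  case True
  have "(a = (y + i - 2) mod (d + 1) + 1) \<longleftrightarrow> (a \<le> d + 1 \<and> i = (a + (d+1) - y) mod (d+1) + 1)"
  proof (cases "a \<le> d + 1")
    case True
    have "(a - 1 = (y - 1 + (i - 1)) mod (d+1)) \<longleftrightarrow> (i - 1 = (a - 1 + (d+1) - (y - 1)) mod (d+1))"
      using modaux[of "a - 1" "d+1" "y - 1" "i - 1"] True \<open>i \<le> d + 1\<close> assms by auto
    moreover have "y - 1 + (i - 1) = y + i - 2" "a - 1 + (d+1) - (y - 1) = a + (d+1) - y" using assms True by auto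
    ultimately show ?thesis using True assms by auto
  next
    case False
    have "(y + i - 2) mod (d + 1) < d + 1" by simp
    then show ?thesis using False by auto
  qed
  then show ?thesis using True assms unfolding Vmat_def idx_def by auto
next
  case False
  then show ?thesis using assms unfolding Vmat_def idx_def by auto
qed

lemma idx_range: "1 \<le> m \<Longrightarrow> 1 \<le> y \<Longrightarrow> y \<le> d \<Longrightarrow> 1 \<le> a \<Longrightarrow> a \<le> d + m \<Longrightarrow> idx d y a \<in> {1..d+m}"
proof -
  assume h: "1 \<le> m" "1 \<le> y" "y \<le> d" "1 \<le> a" "a \<le> d + m"
  have B: "(a + (d+1) - y) mod (d+1) < d + 1" by simp
  show ?thesis
  proof (cases "a \<le> d + 1")
    case True
    then have "idx d y a = (a + (d+1) - y) mod (d+1) + 1" unfolding idx_def by simp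
    moreover have "(a + (d+1) - y) mod (d+1) + 1 \<le> d + m" using B h(1) by linarith
    ultimately show ?thesis by simp
  qed (use h in \<open>auto simp: idx_def\<close>)
qed

lemma idx_LL:
  assumes "1 \<le> y" "y \<le> d" "1 \<le> x" "x \<le> d"
  shows "(idx d y a = idx d x b) \<longleftrightarrow> (LL d (x, a) = LL d (y, b))"
proof -
  have A: "(a + (d+1) - y) mod (d+1) < d + 1" "(b + (d+1) - x) mod (d+1) < d + 1"
     "(a + x) mod (d+1) < d + 1" "(b + y) mod (d+1) < d + 1" by auto
  show ?thesis using Lcong[of y "d+1" x a b] assms A unfolding idx_def LL_def
    by (auto simp: add.commute)
qed

lemma Eunit_app: "Eunit r s x y = (if x = r \<and> y = s then 1 else 0)"
  unfolding Eunit_def by simp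

lemma entry:
  assumes m: "1 \<le> m" and p: "(x, a) \<in> {1..d} \<times> {1..d+m}" and q: "(y, b) \<in> {1..d} \<times> {1..d+m}"
  shows "ptrans1 (choi d m) (x, a) (y, b) = (1 / of_nat (d * (d + m))) * (if LL d (x, a) = LL d (y, b) then 1 else 0)"
proof -
  have c: "choi d m (y, a) (x, b) = Phi d m (Eunit y x) a b"
  proof -
    have "choi d m (y, a) (x, b) = (\<Sum>r\<in>{1..d}. \<Sum>s\<in>{1..d}. Eunit r s y x * Phi d m (Eunit r s) a b)"
      unfolding choi_def by simp
    also have "\<dots> = (\<Sum>r\<in>{1..d}. if r = y then Phi d m (Eunit r x) a b else 0)"
    proof (intro sum.cong refl)
      fix r
      have "(\<Sum>s\<in>{1..d}. Eunit r s y x * Phi d m (Eunit r s) a b) = (\<Sum>s\<in>{1..d}. if s = x then (if r = y then Phi d m (Eunit r s) a b else 0) else 0)"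
        by (intro sum.cong refl) (auto simp: Eunit_app)
      also have "\<dots> = (if r = y then Phi d m (Eunit r x) a b else 0)" using p by simp
      finally show "(\<Sum>s\<in>{1..d}. Eunit r s y x * Phi d m (Eunit r s) a b) = (if r = y then Phi d m (Eunit r x) a b else 0)" .
    qed
    also have "\<dots> = Phi d m (Eunit y x) a b" using q by simp
    finally show ?thesis .
  qed
  have ph: "Phi d m (Eunit y x) a b = (1 / of_nat (d * (d + m))) * (\<Sum>i\<in>{1..d+m}. cnj (Vmat d m i y a) * Vmat d m i x b)"
  proof -
    have "\<And>i. (\<Sum>r\<in>{1..d}. \<Sum>s\<in>{1..d}. cnj (Vmat d m i r a) * Eunit y x r s * Vmat d m i s b) = cnj (Vmat d m i y a) * Vmat d m i x b"
    proof -
      fix i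
      have "(\<Sum>r\<in>{1..d}. \<Sum>s\<in>{1..d}. cnj (Vmat d m i r a) * Eunit y x r s * Vmat d m i s b)
          = (\<Sum>r\<in>{1..d}. if r = y then cnj (Vmat d m i r a) * Vmat d m i x b else 0)"
      proof (intro sum.cong refl)
        fix r
        have "(\<Sum>s\<in>{1..d}. cnj (Vmat d m i r a) * Eunit y x r s * Vmat d m i s b) = (\<Sum>s\<in>{1..d}. if s = x then (if r = y then cnj (Vmat d m i r a) * Vmat d m i s b else 0) else 0)"
          by (intro sum.cong refl) (auto simp: Eunit_app)
        also have "\<dots> = (if r = y then cnj (Vmat d m i r a) * Vmat d m i x b else 0)" using p by simp
        finally show "(\<Sum>s\<in>{1..d}. cnj (Vmat d m i r a) * Eunit y x r s * Vmat d m i s b) = (if r = y then cnj (Vmat d m i r a) * Vmat d m i x b else 0)" .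
      qed
      also have "\<dots> = cnj (Vmat d m i y a) * Vmat d m i x b" using q by simp
      finally show "?thesis i" .
    qed
    then show ?thesis unfolding Phi_def by simp
  qed
  have "(\<Sum>i\<in>{1..d+m}. cnj (Vmat d m i y a) * Vmat d m i x b) = (\<Sum>i\<in>{1..d+m}. if i = idx d y a then (if idx d y a = idx d x b then 1 else 0) else 0)"
  proof (intro sum.cong refl)
    fix i assume "i \<in> {1..d+m}"
    then show "cnj (Vmat d m i y a) * Vmat d m i x b = (if i = idx d y a then (if idx d y a = idx d x b then 1 else 0) else 0)"
      using p q by (simp add: V_idx)
  qed
  also have "\<dots> = (if idx d y a = idx d x b then 1 else 0)"
    using idx_range[OF m, of y d a] p q by simp
  also have "\<dots> = (if LL d (x, a) = LL d (y, b) then 1 else 0)"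
    using idx_LL[of y d x a b] p q by simp
  finally show ?thesis unfolding ptrans1_def using c ph by simp
qed

lemma aux: "(c::complex) * (cnj (sum v A) * S) = (\<Sum>p\<in>A. c * (cnj (v p) * S))"
  by (simp add: cnj_sum sum_distrib_left sum_distrib_right mult.assoc)

theorem mainTheorem5:
  fixes d m :: nat
  assumes "d \<ge> 2" and "m \<ge> 1"
  shows "psd ({1..d} \<times> {1..d+m}) (ptrans1 (choi d m))"
  unfolding psd_def
proof
  fix v :: "nat \<times> nat \<Rightarrow> complex"
  define I where "I = {1..d} \<times> {1..d+m}"
  define c :: complex where "c = 1 / of_nat (d * (d + m))"
  have fI: "finite I" unfolding I_def by simp
  have "(\<Sum>p\<in>I. \<Sum>q\<in>I. cnj (v p) * ptrans1 (choi d m) p q * v q)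
      = (\<Sum>p\<in>I. \<Sum>q\<in>I. cnj (v p) * (c * (if LL d p = LL d q then 1 else 0)) * v q)"
    unfolding I_def c_def using entry[OF assms(2)] by (intro sum.cong refl) auto
  also have "\<dots> = (\<Sum>p\<in>I. c * (cnj (v p) * (\<Sum>q\<in>{q\<in>I. LL d q = LL d p}. v q)))"
    by (intro sum.cong refl) (auto simp: sum.inter_filter[OF fI] sum_distrib_left intro!: sum.cong)
  also have "\<dots> = (\<Sum>l\<in>LL d ` I. \<Sum>p\<in>{p\<in>I. LL d p = l}. c * (cnj (v p) * (\<Sum>q\<in>{q\<in>I. LL d q = l}. v q)))"
    by (subst sum.image_gen[OF fI, where g="LL d"]) (intro sum.cong refl; auto)
  also have "\<dots> = (\<Sum>l\<in>LL d ` I. c * (cnj (\<Sum>p\<in>{p\<in>I. LL d p = l}. v p) * (\<Sum>q\<in>{q\<in>I. LL d q = l}. v q)))"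
    by (intro sum.cong refl) (rule aux[symmetric])
  also have "\<dots> \<ge> 0"
  proof (rule sum_nonneg)
    fix l
    have "c = complex_of_real (1 / real (d * (d + m)))" unfolding c_def by simp
    then have "c \<ge> 0" by (simp add: less_eq_complex_def)
    moreover have "\<And>z::complex. cnj z * z \<ge> 0" by (simp add: less_eq_complex_def)
    ultimately show "c * (cnj (\<Sum>p\<in>{p\<in>I. LL d p = l}. v p) * (\<Sum>q\<in>{q\<in>I. LL d q = l}. v q)) \<ge> 0"
      by (rule mult_nonneg_nonneg)
  qed
  finally show "0 \<le> (\<Sum>p\<in>{1..d} \<times> {1..d+m}. \<Sum>q\<in>{1..d} \<times> {1..d+m}. cnj (v p) * ptrans1 (choi d m) p q * v q)"
    unfolding I_def .
qed
end
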